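(* Let $r,k\geq2$ be integers with $(r,k)\neq(2,2)$. Then $\zeta<r(k-1)$, where $\zeta=r\beta/\alpha$.
   Context: $f_t(\mu)=e^{-\mu}\sum_{i\geq t}\mu^i/i!$. $\mu_{r,k}$ is the unique minimizer over $\mu>0$ of $\mu/f_{k-1}(\mu)^{r-1}$, $\alpha=f_k(\mu_{r,k})$ and $\beta=\frac1r\mu_{r,k}f_{k-1}(\mu_{r,k})$; thus $\zeta=\mu_{r,k}f_{k-1}(\mu_{r,k})/f_k(\mu_{r,k})$. *)

theory Defs
  imports "HOL-Analysis.Analysis"
begin

definition ptail :: "nat \<Rightarrow> real \<Rightarrow> real" where
  "ptail t \<mu> = exp (- \<mu>) * (\<Sum>i. if t \<le> i then \<mu> ^ i / fact i else 0)"

definition mu_rk :: "nat \<Rightarrow> nat \<Rightarrow> real" where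
  "mu_rk r k = (THE \<mu>. \<mu> > 0 \<and>
     (\<forall>\<nu>>0. \<mu> / ptail (k - 1) \<mu> ^ (r - 1) \<le> \<nu> / ptail (k - 1) \<nu> ^ (r - 1)))"

definition alpha_rk :: "nat \<Rightarrow> nat \<Rightarrow> real" where
  "alpha_rk r k = ptail k (mu_rk r k)"

definition beta_rk :: "nat \<Rightarrow> nat \<Rightarrow> real" where
  "beta_rk r k = (1 / real r) * mu_rk r k * ptail (k - 1) (mu_rk r k)"

definition zeta_rk :: "nat \<Rightarrow> nat \<Rightarrow> real" where
  "zeta_rk r k = real r * beta_rk r k / alpha_rk r k"

end

theory Submission imports Defs begin

lemma ptail_fin: "ptail t x = 1 - exp (-x) * (\<Sum>i<t. x^i / fact i)"
proof -
  have e: "(\<lambda>i. x^i / fact i) sums exp x"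
    using exp_converges[of x] by (simp add: divide_inverse mult.commute)
  have "(\<lambda>n. if n \<in> {..<t} then 0 else x^n / fact n) sums (exp x + (\<Sum>n\<in>{..<t}. 0 - x^n / fact n))"
    by (rule sums_If_finite_set'[OF e]) auto
  moreover have "(\<lambda>n. if n \<in> {..<t} then 0 else x^n / fact n) = (\<lambda>i. if t \<le> i then x ^ i / fact i else 0)"
    by (auto simp: fun_eq_iff)
  ultimately have "(\<lambda>i. if t \<le> i then x ^ i / fact i else 0) sums (exp x - (\<Sum>i<t. x^i / fact i))"
    by (simp add: sum_negf)
  then have "(\<Sum>i. if t \<le> i then x ^ i / fact i else 0) = exp x - (\<Sum>i<t. x^i / fact i)"
    by (rule sums_unique[symmetric])
  then show ?thesis unfolding ptail_def
    by (simp add: right_diff_distrib exp_minus_inverse exp_minus field_simps)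
qed

lemma ptail_Suc: "ptail (Suc t) x = ptail t x - exp (-x) * x^t / fact t"
  by (simp add: ptail_fin algebra_simps)

lemma ptail_deriv: "DERIV (ptail (Suc t)) x :> exp (-x) * x^t / fact t"
proof (induction t)
  case 0
  have "ptail (Suc 0) = (\<lambda>x. 1 - exp (-x))" by (simp add: ptail_fin fun_eq_iff)
  moreover have "DERIV (\<lambda>x. 1 - exp (-x)) x :> exp (-x)"
    by (auto intro!: derivative_eq_intros)
  ultimately show ?case by simp
next
  case (Suc t)
  have eq: "ptail (Suc (Suc t)) = (\<lambda>x. ptail (Suc t) x - exp (-x) * x^(Suc t) / fact (Suc t))"
    by (simp add: ptail_Suc[of "Suc t"] fun_eq_iff del: fact_Suc)
  have "DERIV (\<lambda>x. ptail (Suc t) x - exp (-x) * x^(Suc t) / fact (Suc t)) x :>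
     exp (-x) * x^t / fact t - ((- exp (-x)) * x^(Suc t) + exp (-x) * (real (Suc t) * x^t)) / fact (Suc t)"
    by (auto intro!: derivative_eq_intros Suc simp del: fact_Suc power_Suc)
  moreover have "exp (-x) * x^t / fact t - ((- exp (-x)) * x^(Suc t) + exp (-x) * (real (Suc t) * x^t)) / fact (Suc t)
     = exp (-x) * x^(Suc t) / fact (Suc t)"
    by (simp add: field_simps del: fact_Suc) (simp add: algebra_simps)
  ultimately show ?case using eq by simp
qed

definition Hf :: "nat \<Rightarrow> real \<Rightarrow> real" where
  "Hf a x = (exp x - (\<Sum>i<a. x^i / fact i)) * fact a / x^a"
definition Tm :: "nat \<Rightarrow> real \<Rightarrow> nat \<Rightarrow> real" where
  "Tm a x j = x^j * fact a / fact (a + j)"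

lemma Hf_sums: assumes "x > 0" shows "Tm a x sums Hf a x"
proof -
  have e: "(\<lambda>i. x^i / fact i) sums exp x"
    using exp_converges[of x] by (simp add: divide_inverse mult.commute)
  have "(\<lambda>j. x^(j+a) / fact (j+a)) sums (exp x - (\<Sum>i<a. x^i / fact i))"
    using sums_split_initial_segment[OF e, of a] .
  then have "(\<lambda>j. x^(j+a) / fact (j+a) * (fact a / x^a)) sums ((exp x - (\<Sum>i<a. x^i / fact i)) * (fact a / x^a))"
    by (rule sums_mult2)
  moreover have "(\<lambda>j. x^(j+a) / fact (j+a) * (fact a / x^a)) = Tm a x"
    using assms by (auto simp: fun_eq_iff Tm_def power_add add.commute)
  ultimately show ?thesis by (simp add: Hf_def)
qed

lemma Tm_nonneg: "x \<ge> 0 \<Longrightarrow> Tm a x j \<ge> 0"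
  by (simp add: Tm_def)

lemma Hf_ge_sum: assumes "x > 0" shows "(\<Sum>j<n. Tm a x j) \<le> Hf a x"
  using sum_le_suminf[OF sums_summable[OF Hf_sums[OF assms]], of "{..<n}"] Tm_nonneg[of x a] assms
    sums_unique[OF Hf_sums[OF assms]] by auto

lemma Hf_ge1: assumes "x > 0" shows "1 \<le> Hf a x"
  using Hf_ge_sum[OF assms, of a 1] by (simp add: Tm_def)

lemma Hf_le_exp: assumes "x > 0" shows "Hf a x \<le> exp x"
proof -
  have e: "(\<lambda>i. x^i / fact i) sums exp x"
    using exp_converges[of x] by (simp add: divide_inverse mult.commute)
  have "\<And>j. Tm a x j \<le> x^j / fact j"
  proof -
    fix j
    have "fact a * fact j \<le> (fact (a+j) :: real)"
    proof -
      have "fact a * fact j * real (a + j choose a) = fact (a+j)"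
        using binomial_fact_lemma[of a "a+j"] by (metis add_diff_cancel_left' le_add1 of_nat_fact of_nat_mult)
      moreover have "real (a + j choose a) \<ge> 1" by (simp add: Suc_leI)
      moreover have "fact a * fact j \<ge> (0::real)" by simp
      ultimately show ?thesis
        by (metis mult_cancel_left1 mult_left_mono mult.commute)
    qed
    then show "Tm a x j \<le> x^j / fact j"
      using assms unfolding Tm_def by (simp add: field_simps mult_left_mono)
  qed
  then show ?thesis
    using sums_le[OF _ Hf_sums[OF assms] e] by auto
qed

lemma Hf_mono: assumes "0 < x" "x < y" shows "Hf a x < Hf a y"
proof -
  have "(\<lambda>j. Tm a y j - Tm a x j) sums (Hf a y - Hf a x)"
  proof -
    have "y > 0" using assms by simp
    show ?thesis using sums_diff[OF Hf_sums[OF \<open>y > 0\<close>] Hf_sums[OF \<open>0 < x\<close>], of a a] by simp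
  qed
  moreover have "\<And>j. 0 \<le> Tm a y j - Tm a x j"
  proof -
    fix j
    have "x^j \<le> y^j" using assms by (intro power_mono) auto
    then have "x^j * fact a / fact (a+j) \<le> y^j * fact a / fact (a+j)"
      by (intro divide_right_mono mult_right_mono) auto
    then show "0 \<le> Tm a y j - Tm a x j" by (simp add: Tm_def)
  qed
  moreover have "0 < Tm a y 1 - Tm a x 1"
    using assms unfolding Tm_def by (simp add: divide_strict_right_mono del: fact_Suc)
  ultimately have "0 < Hf a y - Hf a x"
    using suminf_pos2[of "\<lambda>j. Tm a y j - Tm a x j" 1] sums_summable sums_unique by metis
  then show ?thesis by simp
qed

lemma ptail_H: assumes "x > 0" shows "ptail a x = exp (-x) * x^a / fact a * Hf a x"
proof -
  have "exp (-x) * x^a / fact a * Hf a x = exp (-x) * (exp x - (\<Sum>i<a. x^i / fact i)) * (x^a / x^a) * (fact a / fact a)"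
    unfolding Hf_def by (simp add: field_simps)
  also have "\<dots> = exp (-x) * (exp x - (\<Sum>i<a. x^i / fact i))" using assms by simp
  also have "\<dots> = 1 - exp (-x) * (\<Sum>i<a. x^i / fact i)"
    by (simp add: right_diff_distrib exp_minus field_simps)
  finally show ?thesis by (simp add: ptail_fin)
qed

lemma Hf_cont: "continuous_on {0<..} (Hf a)"
  unfolding Hf_def by (auto intro!: continuous_intros)

lemma polymono: fixes n M L :: real assumes "n \<ge> 0" "L \<ge> 0" "M \<ge> L"
  shows "L*n*(n+1) + L^2*(n+1) + L^3 \<le> M*n*(n+1) + M^2*(n+1) + M^3"
proof -
  have "L*n*(n+1) \<le> M*n*(n+1)" using assms by (intro mult_right_mono) auto
  moreover have "L^2*(n+1) \<le> M^2*(n+1)" using assms by (intro mult_right_mono power_mono) auto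
  moreover have "L^3 \<le> M^3" using assms by (intro power_mono) auto
  ultimately show ?thesis by linarith
qed

lemma poly1: fixes n M :: real assumes "n \<ge> 4" "M \<ge> n - 2"
  shows "(n-1)*n*(n+1) < M*n*(n+1) + M^2*(n+1) + M^3"
proof -
  define t where "t = n - 4"
  have t: "t \<ge> 0" "n = 4 + t" using assms by (auto simp: t_def)
  have "(n-2)*n*(n+1) + (n-2)^2*(n+1) + (n-2)^3 - (n-1)*n*(n+1) = 8 + 27*t + 14*t^2 + 2*t^3"
    unfolding t(2) by (simp add: power2_eq_square power3_eq_cube algebra_simps)
  moreover have "8 + 27*t + 14*t^2 + 2*t^3 > 0" using t by (simp add: add_pos_nonneg)
  moreover have "(n-2)*n*(n+1) + (n-2)^2*(n+1) + (n-2)^3 \<le> M*n*(n+1) + M^2*(n+1) + M^3"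
    using assms by (intro polymono) auto
  ultimately show ?thesis by linarith
qed

lemma poly2: fixes n M :: real assumes "n \<ge> 3" "M \<ge> n - 3/2"
  shows "(n-1)*n*(n+1) < M*n*(n+1) + M^2*(n+1) + M^3"
proof -
  define t where "t = n - 3"
  have t: "t \<ge> 0" "n = 3 + t" using assms by (auto simp: t_def)
  have "(n-3/2)*n*(n+1) + (n-3/2)^2*(n+1) + (n-3/2)^3 - (n-1)*n*(n+1) = 51/8 + 35/2*t + 11*t^2 + 2*t^3"
    unfolding t(2) by (simp add: power2_eq_square power3_eq_cube algebra_simps) (simp add: field_simps)
  moreover have "51/8 + 35/2*t + 11*t^2 + 2*t^3 > 0" using t by (simp add: add_pos_nonneg)
  moreover have "(n-3/2)*n*(n+1) + (n-3/2)^2*(n+1) + (n-3/2)^3 \<le> M*n*(n+1) + M^2*(n+1) + M^3"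
    using assms by (intro polymono) auto
  ultimately show ?thesis by linarith
qed

lemma Tm_Suc: "Tm a x (Suc j) = Tm a x j * x / real (a + Suc j)"
  unfolding Tm_def by (simp add: field_simps)

lemma Hf_big:
  fixes r a :: nat
  assumes r: "r \<ge> 2" and a: "a \<ge> 1" and ra: "(r, a) \<noteq> (2, 1)"
  shows "Hf a (real r * real a - real r / (real r - 1)) > (real r - 1) * real a"
proof -
  define M where "M = real r * real a - real r / (real r - 1)"
  define n where "n = real r * real a"
  define c where "c = (r - 1) * a"
  have c2: "c \<ge> 2"
  proof (cases "r = 2")
    case True then have "a \<ge> 2" using a ra by auto
    then show ?thesis using True by (simp add: c_def)
  next
    case False then have "r - 1 \<ge> 2" using r by auto
    then have "(r - 1) * a \<ge> 2 * 1" using a by (intro mult_mono) auto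
    then show ?thesis by (simp add: c_def)
  qed
  define m where "m = c - 2"
  have rc: "real c = (real r - 1) * real a" using r by (simp add: c_def of_nat_diff)
  have rm: "real m = real c - 2" using c2 by (simp add: m_def of_nat_diff)
  have am: "real (a + m) = n - 2" using rm rc by (simp add: n_def algebra_simps)
  have rr: "real r / (real r - 1) \<le> 2" using r by (simp add: divide_le_eq)
  have Mn: "M \<ge> n - 2" using rr by (simp add: M_def n_def)
  have n3: "n \<ge> 3"
  proof -
    have "real (a + m) \<ge> 1" using a by simp
    then show ?thesis using am by simp
  qed
  have Mpos: "M > 0" using Mn n3 by simp
  have T1: "Tm a M j \<ge> 1" if "j \<le> m" for j
    using that
  proof (induction j)
    case 0 then show ?case by (simp add: Tm_def)
  next
    case (Suc j)
    have "real (a + Suc j) \<le> real (a + m)" using Suc.prems by simp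
    also have "\<dots> \<le> M" using am Mn by simp
    finally have "M / real (a + Suc j) \<ge> 1" by simp
    moreover have "Tm a M j \<ge> 1" using Suc by simp
    ultimately have "Tm a M j * (M / real (a + Suc j)) \<ge> 1 * 1"
      by (intro mult_mono) auto
    then show ?case by (simp add: Tm_Suc)
  qed
  have S1: "(\<Sum>j<Suc m. Tm a M j) \<ge> real (Suc m)"
  proof -
    have "(\<Sum>j<Suc m. (1::real)) \<le> (\<Sum>j<Suc m. Tm a M j)"
      by (intro sum_mono T1) auto
    then show ?thesis by simp
  qed
  define \<tau> where "\<tau> = Tm a M m"
  have tau: "\<tau> \<ge> 1" using T1 by (simp add: \<tau>_def)
  have e1: "real (a + Suc m) = n - 1" using am by simp
  have e2: "real (a + Suc (Suc m)) = n" using am by simp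
  have e3: "real (a + Suc (Suc (Suc m))) = n + 1" using am by simp
  define Q where "Q = M/(n-1) + M/(n-1)*M/n + M/(n-1)*M/n*M/(n+1)"
  have T2: "Tm a M (Suc m) + Tm a M (Suc (Suc m)) + Tm a M (Suc (Suc (Suc m))) = \<tau> * Q"
    unfolding Q_def \<tau>_def by (simp only: Tm_Suc e1 e2 e3) (simp add: algebra_simps)
  have poly: "(n-1)*n*(n+1) < M*n*(n+1) + M^2*(n+1) + M^3"
  proof (cases "r = 2")
    case True
    then have "a \<ge> 2" using a ra by auto
    then have "n \<ge> 4" using True by (simp add: n_def)
    then show ?thesis using poly1 Mn by blast
  next
    case False
    then have "real r \<ge> 3" using r by simp
    then have "real r / (real r - 1) \<le> 3/2" by (simp add: divide_le_eq)
    then have "M \<ge> n - 3/2" by (simp add: M_def n_def)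
    then show ?thesis using poly2 n3 by blast
  qed
  have Qeq: "Q = (M*n*(n+1) + M^2*(n+1) + M^3) / ((n-1)*n*(n+1))"
  proof -
    have h: "n - 1 \<noteq> 0" "n \<noteq> 0" "n + 1 \<noteq> 0" using n3 by auto
    show ?thesis unfolding Q_def
      by (simp add: h divide_simps power2_eq_square power3_eq_cube) (simp add: algebra_simps)
  qed
  have Q1: "Q > 1" unfolding Qeq using poly n3 by (simp add: less_divide_eq)
  have "\<tau> * Q \<ge> Q" using tau Q1 by (simp add: mult_le_cancel_right1)
  have "(\<Sum>j<Suc (Suc (Suc (Suc m))). Tm a M j) = (\<Sum>j<Suc m. Tm a M j) + \<tau> * Q"
    using T2 by simp
  also have "\<dots> > real (Suc m) + 1" using S1 \<open>\<tau> * Q \<ge> Q\<close> Q1 by linarith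
  finally have "(\<Sum>j<Suc (Suc (Suc (Suc m))). Tm a M j) > real c" using rm by simp
  moreover have "(\<Sum>j<Suc (Suc (Suc (Suc m))). Tm a M j) \<le> Hf a M"
    using Hf_ge_sum Mpos by blast
  ultimately show ?thesis using rc by (simp add: M_def)
qed


lemma g_deriv:
  fixes b q :: nat and x :: real
  assumes x: "x > 0"
  shows "\<exists>D P. DERIV (\<lambda>y. y / ptail (Suc b) y ^ Suc q) x :> D \<and> P > 0 \<and>
           D = P * (Hf (Suc b) x - real (Suc q) * real (Suc b))"
proof -
  define F where "F = ptail (Suc b) x"
  define F' where "F' = exp (-x) * x^b / fact b"
  define K where "K = exp (-x) * x^(Suc b) / fact (Suc b)"
  define H where "H = Hf (Suc b) x"
  have K0: "K > 0" using x by (simp add: K_def)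
  have FKH: "F = K * H" unfolding F_def K_def H_def using ptail_H[OF x, of "Suc b"] by simp
  have H1: "H \<ge> 1" using Hf_ge1[OF x] by (simp add: H_def)
  have F0: "F > 0" using FKH K0 H1 by simp
  have xF': "x * F' = real (Suc b) * K"
    unfolding F'_def K_def by (simp add: field_simps del: fact_Suc) (simp add: algebra_simps)
  have d1: "DERIV (ptail (Suc b)) x :> F'" unfolding F'_def by (rule ptail_deriv)
  have d2: "DERIV (\<lambda>y. ptail (Suc b) y ^ Suc q) x :> real (Suc q) * (F' * F ^ q)"
    using DERIV_power[OF d1, of "Suc q"] by (simp add: F_def)
  have d3: "DERIV (\<lambda>y. y / ptail (Suc b) y ^ Suc q) x :>
       (1 * F ^ Suc q - real (Suc q) * (F' * F ^ q) * x) / (F ^ Suc q) ^ Suc (Suc 0)"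
    using DERIV_quotient[OF DERIV_ident d2] F0 by (simp add: F_def)
  define P where "P = F ^ q * K / (F ^ Suc q) ^ Suc (Suc 0)"
  have P0: "P > 0" using F0 K0 by (simp add: P_def)
  have "1 * F ^ Suc q - real (Suc q) * (F' * F ^ q) * x = F ^ q * (F - real (Suc q) * (x * F'))"
    by (simp add: algebra_simps)
  also have "\<dots> = F ^ q * K * (H - real (Suc q) * real (Suc b))"
    unfolding xF' FKH by (simp add: algebra_simps)
  finally have "(1 * F ^ Suc q - real (Suc q) * (F' * F ^ q) * x) / (F ^ Suc q) ^ Suc (Suc 0)
      = P * (H - real (Suc q) * real (Suc b))"
    by (simp add: P_def)
  then show ?thesis using d3 P0 unfolding H_def by metis
qed


theorem lemma50:
  fixes r k :: nat
  assumes "r \<ge> 2" and "k \<ge> 2" and "(r, k) \<noteq> (2, 2)"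
  shows "zeta_rk r k < real r * (real k - 1)"
proof -
  obtain b where kb: "k = Suc (Suc b)" using assms(2) by (metis add_2_eq_Suc le_Suc_ex)
  obtain q where rq: "r = Suc (Suc q)" using assms(1) by (metis add_2_eq_Suc le_Suc_ex)
  define a where "a = Suc b"
  define R where "R = real r"
  define A where "A = real a"
  define c where "c = (R - 1) * A"
  define g where "g = (\<lambda>y::real. y / ptail a y ^ Suc q)"
  have r1: "r - 1 = Suc q" "k - 1 = a" using rq kb by (auto simp: a_def)
  have cq: "real (Suc q) * real (Suc b) = c" using rq by (simp add: c_def R_def A_def a_def)
  have ra: "(r, a) \<noteq> (2, 1)" using assms(3) kb by (auto simp: a_def)
  define M where "M = R * A - R / (R - 1)"
  have HM: "Hf a M > c"
    using Hf_big[OF assms(1) _ ra] by (simp add: M_def R_def A_def c_def a_def)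
  have c2: "c \<ge> 2"
  proof -
    have "R - 1 \<ge> 1" "A \<ge> 1" using rq by (auto simp: R_def A_def a_def)
    show ?thesis
    proof (cases "R - 1 \<ge> 2")
      case True
      have "(R - 1) * A \<ge> 2 * 1" by (rule mult_mono) (use True \<open>A \<ge> 1\<close> in auto)
      then show ?thesis unfolding c_def by simp
    next
      case False
      then have "r = 2" using rq by (simp add: R_def)
      then have "a \<ge> 2" using ra by (auto simp: a_def)
      then show ?thesis using \<open>r = 2\<close> by (simp add: c_def R_def A_def)
    qed
  qed
  have M1: "M \<ge> 1"
  proof -
    have "R / (R - 1) \<le> 2" using rq by (simp add: R_def divide_le_eq)
    moreover have "A \<ge> 1" by (simp add: A_def a_def)
    moreover have "R * A \<ge> 3" using c2 calculation(2) by (simp add: c_def algebra_simps)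
    ultimately show ?thesis by (simp add: M_def)
  qed
  define x0 where "x0 = ln (3/2 :: real)"
  have x0: "x0 > 0" "x0 < 1" "exp x0 = 3/2"
    unfolding x0_def using ln_le_minus_one[of "3/2::real"] by auto
  have Hx0: "Hf a x0 \<le> c" using Hf_le_exp[OF x0(1), of a] x0 c2 by simp
  have cont: "continuous_on {x0..M} (Hf a)"
    using Hf_cont by (rule continuous_on_subset) (use x0 in auto)
  obtain \<mu> where mu: "x0 \<le> \<mu>" "\<mu> \<le> M" "Hf a \<mu> = c"
    using IVT'[of "Hf a" x0 c M, OF Hx0 _ _ cont] HM x0 M1 by auto
  have mu0: "\<mu> > 0" using mu x0 by simp
  have muM: "\<mu> < M"
  proof (rule ccontr)
    assume "\<not> \<mu> < M" then have "\<mu> = M" using mu by simp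
    then show False using mu HM by simp
  qed
  have gd: "\<exists>D P. DERIV g x :> D \<and> P > 0 \<and> D = P * (Hf a x - c)" if "x > 0" for x
    using g_deriv[OF that, of b q] cq unfolding g_def a_def by simp
  have gcont: "continuous_on {u..v} g" if "u > 0" for u v
  proof (rule continuous_at_imp_continuous_on, intro ballI)
    fix x assume "x \<in> {u..v}"
    then have "x > 0" using that by simp
    then show "isCont g x" using gd DERIV_isCont by blast
  qed
  have less: "g \<mu> < g \<nu>" if "\<nu> > 0" "\<nu> \<noteq> \<mu>" for \<nu>
  proof (cases "\<nu> > \<mu>")
    case True
    show ?thesis
    proof (rule DERIV_pos_imp_increasing_open[OF True _ gcont[OF mu0]])
      fix x assume x: "\<mu> < x" "x < \<nu>"
      then have "Hf a x > c" using Hf_mono[OF mu0 x(1), of a] mu by simp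
      moreover obtain D P where "DERIV g x :> D" "P > 0" "D = P * (Hf a x - c)"
        using gd[of x] x mu0 by auto
      ultimately show "\<exists>y. DERIV g x :> y \<and> y > 0" by auto
    qed
  next
    case False
    then have lt: "\<nu> < \<mu>" using that by simp
    have nu0: "\<nu> > 0" using that by simp
    show ?thesis
    proof (rule DERIV_neg_imp_decreasing_open[OF lt _ gcont[OF that(1)]])
      fix x assume x: "\<nu> < x" "x < \<mu>"
      have xp: "x > 0" using x nu0 by simp
      then have "Hf a x < c" using Hf_mono[OF xp x(2), of a] mu by simp
      moreover obtain D P where "DERIV g x :> D" "P > 0" "D = P * (Hf a x - c)"
        using gd[OF xp] by auto
      ultimately show "\<exists>y. DERIV g x :> y \<and> y < 0" by (auto simp: mult_pos_neg)
    qed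
  qed
  have mueq: "mu_rk r k = \<mu>"
    unfolding mu_rk_def r1
  proof (rule the_equality)
    show "0 < \<mu> \<and> (\<forall>\<nu>>0. \<mu> / ptail a \<mu> ^ Suc q \<le> \<nu> / ptail a \<nu> ^ Suc q)"
    proof (intro conjI allI impI)
      fix \<nu> :: real assume "\<nu> > 0"
      then have "g \<mu> \<le> g \<nu>" using less by (cases "\<nu> = \<mu>") (auto intro: less_imp_le)
      then show "\<mu> / ptail a \<mu> ^ Suc q \<le> \<nu> / ptail a \<nu> ^ Suc q" by (simp add: g_def)
    qed (rule mu0)
  next
    fix \<mu>' assume h: "0 < \<mu>' \<and> (\<forall>\<nu>>0. \<mu>' / ptail a \<mu>' ^ Suc q \<le> \<nu> / ptail a \<nu> ^ Suc q)"
    show "\<mu>' = \<mu>"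
    proof (rule ccontr)
      assume "\<mu>' \<noteq> \<mu>"
      then have "g \<mu> < g \<mu>'" using less h by blast
      moreover have "g \<mu>' \<le> g \<mu>" using h mu0 by (simp add: g_def)
      ultimately show False by simp
    qed
  qed
  define K where "K = exp (-\<mu>) * \<mu>^a / fact a"
  have K0: "K > 0" using mu0 by (simp add: K_def)
  have Fa: "ptail a \<mu> = K * c" using ptail_H[OF mu0, of a] mu by (simp add: K_def)
  have Fk: "ptail k \<mu> = K * (c - 1)"
  proof -
    have "ptail k \<mu> = ptail a \<mu> - K" using ptail_Suc[of a \<mu>] kb by (simp add: a_def K_def)
    then show ?thesis using Fa by (simp add: algebra_simps)
  qed
  have R0: "R > 0" using rq by (simp add: R_def)
  have z: "zeta_rk r k = \<mu> * c / (c - 1)"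
    unfolding zeta_rk_def beta_rk_def alpha_rk_def mueq r1 Fa Fk
    using K0 c2 R0 by (simp add: R_def field_simps)
  have "\<mu> * c < M * c" using muM c2 by simp
  also have "M * c = R * A * (c - 1)"
    using rq by (simp add: M_def c_def R_def field_simps)
  finally have "\<mu> * c / (c - 1) < R * A" using c2 by (simp add: divide_less_eq)
  then show ?thesis using z kb by (simp add: R_def A_def a_def)
qed

end
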